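(* For $\alpha \in (0,d)$ and $\epsilon \in(0, \alpha]$, there exists a constant $C=C(\alpha,\epsilon)>0$ such that $$\|I_\alpha \mu \|_{BMO^{d-\alpha+\epsilon}(\mathbb{R}^d)} \leq C \|\mu\|_{\mathcal{M}^{d-\alpha}(\mathbb{R}^d)}$$ for all $\mu \in \mathcal{M}^{d-\alpha}(\mathbb{R}^d)$ such that $I_\alpha \mu \in L^1(K;\mathcal{H}^{d-\alpha+\epsilon}_\infty)$ for all compact sets $K \subset \mathbb{R}^d$.
   Context: For $\beta\in(0,d]$: $\mathcal{H}^{\beta}_{\infty}(E)= \inf \{\sum_{i} \omega_\beta r_i^\beta : E \subset \bigcup_{i} B(x_i,r_i) \}$, $\omega_\beta= \pi^{\beta/2}/\Gamma(\beta/2+1)$. $f$ is $\mathcal{H}^\beta_\infty$-quasicontinuous if for every $\eta>0$ there is an open $O$ with $\mathcal{H}^\beta_\infty(O)<\eta$ and $f|_{O^c}$ continuous. Choquet integral: $\int_A f\,d\mathcal{H}^\beta_\infty=\int_0^\infty \mathcal{H}^\beta_\infty(\{x\in A: f(x)>t\})\,dt$ for $f\ge0$; $L^1(K;\mathcal{H}^\beta_\infty)$ is the set of quasicontinuous $f$ with $\int_K|f|\,d\mathcal{H}^\beta_\infty<\infty$. $\|u\|_{BMO^{\beta}(\mathbb{R}^d)}= \sup_{Q} \inf_{c \in \mathbb{R}} l(Q)^{-\beta} \int_{Q} |u-c| \,d\mathcal{H}^{\beta}_\infty$, the supremum over all finite cubes $Q\subset\mathbb{R}^d$ with sides parallel to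 the coordinate axes, $l(Q)$ the side length. $\mathcal{M}^{\beta}(\mathbb{R}^d)$ is the space of locally finite signed Radon measures $\nu$ with $\|\nu\|_{\mathcal{M}^\beta}=\sup_{x\in\mathbb{R}^d,r>0} |\nu|(B(x,r))/r^\beta<\infty$. The Riesz potential is $I_\alpha \mu(x)= \frac{1}{\gamma(\alpha)} \int_{\mathbb{R}^d} \frac{d\mu(y)}{|x-y|^{d-\alpha}}$ with $\gamma(\alpha)>0$ the standard normalization constant. *)

theory Defs
  imports "HOL-Analysis.Analysis"
begin

definition omega_const :: "real \<Rightarrow> real" where
  "omega_const \<beta> = pi powr (\<beta> / 2) / Gamma (\<beta> / 2 + 1)"

text \<open>Hausdorff content of dimension beta, via countable covers by open balls.
  Finite covers are included, since radii may be 0 (empty balls).\<close>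
definition hcontent :: "real \<Rightarrow> 'a::euclidean_space set \<Rightarrow> ennreal" where
  "hcontent \<beta> E = (INF xr \<in> {(x :: nat \<Rightarrow> 'a, r :: nat \<Rightarrow> real).
        (\<forall>i. 0 \<le> r i) \<and> E \<subseteq> (\<Union>i. ball (x i) (r i))}.
      (\<Sum>i. ennreal (omega_const \<beta> * (snd xr i) powr \<beta>)))"

definition quasicontinuous :: "real \<Rightarrow> ('a::euclidean_space \<Rightarrow> real) \<Rightarrow> bool" where
  "quasicontinuous \<beta> f \<longleftrightarrow>
     (\<forall>\<eta>>0. \<exists>U. open U \<and> hcontent \<beta> U < ennreal \<eta> \<and> continuous_on (- U) f)"

definition choquet :: "real \<Rightarrow> 'a::euclidean_space set \<Rightarrow> ('a \<Rightarrow> real) \<Rightarrow> ennreal" where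
  "choquet \<beta> A f = (\<integral>\<^sup>+ t. indicator {0..} t * hcontent \<beta> {x \<in> A. f x > t} \<partial>lborel)"

definition L1_content :: "real \<Rightarrow> 'a::euclidean_space set \<Rightarrow> ('a \<Rightarrow> real) \<Rightarrow> bool" where
  "L1_content \<beta> K f \<longleftrightarrow> quasicontinuous \<beta> f \<and> choquet \<beta> K (\<lambda>x. \<bar>f x\<bar>) < \<infinity>"

definition bmo_norm :: "real \<Rightarrow> ('a::euclidean_space \<Rightarrow> real) \<Rightarrow> ennreal" where
  "bmo_norm \<beta> u = (SUP al \<in> {(a :: 'a, l :: real). 0 < l}.
      (INF c :: real. ennreal ((snd al) powr (- \<beta>)) *
          choquet \<beta> (cbox (fst al) (fst al + snd al *\<^sub>R One)) (\<lambda>x. \<bar>u x - c\<bar>)))"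

text \<open>A locally finite signed Radon measure on R^d, given by its Jordan decomposition
  (mu_p, mu_n): two mutually singular locally finite Borel measures; |nu| = mu_p + mu_n.\<close>
definition signed_radon :: "'a::euclidean_space measure \<Rightarrow> 'a measure \<Rightarrow> bool" where
  "signed_radon mp mn \<longleftrightarrow>
     sets mp = sets borel \<and> sets mn = sets borel \<and>
     (\<forall>x r. emeasure mp (ball x r) < \<infinity> \<and> emeasure mn (ball x r) < \<infinity>) \<and>
     (\<exists>A \<in> sets borel. emeasure mp A = 0 \<and> emeasure mn (UNIV - A) = 0)"

definition morrey_norm :: "real \<Rightarrow> 'a::euclidean_space measure \<Rightarrow> 'a measure \<Rightarrow> ennreal" where
  "morrey_norm \<beta> mp mn = (SUP xr \<in> {(x :: 'a, r :: real). 0 < r}.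
      (emeasure mp (ball (fst xr) (snd xr)) + emeasure mn (ball (fst xr) (snd xr)))
        / ennreal ((snd xr) powr \<beta>))"

definition riesz_const :: "real \<Rightarrow> real \<Rightarrow> real" where
  "riesz_const d \<alpha> = pi powr (d / 2) * 2 powr \<alpha> * Gamma (\<alpha> / 2) / Gamma ((d - \<alpha>) / 2)"

definition riesz_kernel :: "real \<Rightarrow> 'a::euclidean_space \<Rightarrow> 'a \<Rightarrow> ennreal" where
  "riesz_kernel \<alpha> x y = (if y = x then \<infinity> else ennreal (dist x y powr (\<alpha> - real DIM('a))))"

text \<open>Riesz potential of nu = mu_p - mu_n, defined where the integral converges absolutely
  (convention: value 0 elsewhere).\<close>
definition riesz_pot :: "real \<Rightarrow> 'a::euclidean_space measure \<Rightarrow> 'a measure \<Rightarrow> 'a \<Rightarrow> real" where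
  "riesz_pot \<alpha> mp mn x =
     (let P = (\<integral>\<^sup>+ y. riesz_kernel \<alpha> x y \<partial>mp); N = (\<integral>\<^sup>+ y. riesz_kernel \<alpha> x y \<partial>mn)
      in if P < \<infinity> \<and> N < \<infinity>
         then (enn2real P - enn2real N) / riesz_const (real DIM('a)) \<alpha> else 0)"

end

theory Submission
  imports Defs
begin
lemma omega_pos: "0 < omega_const b" if "b \<ge> 0"
  unfolding omega_const_def using that by (auto intro!: divide_pos_pos Gamma_real_pos)

lemma hcontent_cover_le:
  assumes "\<And>i. 0 \<le> r i" "E \<subseteq> (\<Union>i. ball (x i) (r i))"
  shows "hcontent b E \<le> (\<Sum>i. ennreal (omega_const b * r i powr b))"
  unfolding hcontent_def
  by (rule INF_lower2[of "(x, r)"]) (use assms in auto)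

lemma hcontent_mono:
  assumes "E \<subseteq> F" shows "hcontent b E \<le> hcontent b F"
  unfolding hcontent_def
  by (rule INF_superset_mono) (use assms in auto)

lemma suminf_single_ennreal:
  "(\<Sum>i. (if i = (0::nat) then (c::ennreal) else 0)) = c"
proof -
  have "(\<lambda>i. (if i = (0::nat) then (c::ennreal) else 0)) sums c"
    using sums_single[of 0 "\<lambda>_. c"] by simp
  then show ?thesis by (rule sums_unique[symmetric])
qed

lemma hcontent_ball_le:
  assumes "R \<ge> 0" "b > 0"
  shows "hcontent b (ball z R) \<le> ennreal (omega_const b * R powr b)"
proof -
  have "hcontent b (ball z R) \<le> (\<Sum>i. ennreal (omega_const b * (if i = 0 then R else 0) powr b))"
    by (rule hcontent_cover_le[where x="\<lambda>_. z"]) (use assms in auto)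
  also have "(\<lambda>i. ennreal (omega_const b * (if i = (0::nat) then R else 0) powr b))
     = (\<lambda>i. if i = 0 then ennreal (omega_const b * R powr b) else 0)"
    by (auto simp: fun_eq_iff)
  finally show ?thesis by (simp add: suminf_single_ennreal)
qed

lemma kernel_measurable[measurable]:
  "(\<lambda>y. riesz_kernel a x y) \<in> borel_measurable borel"
  unfolding riesz_kernel_def by measurable

lemma suminf_ge_term_ennreal: "(f::nat \<Rightarrow> ennreal) k \<le> suminf f"
proof -
  have "f k \<le> sum f {..<Suc k}" by (simp add: sum.lessThan_Suc)
  also have "\<dots> \<le> suminf f" unfolding suminf_eq_SUP by (rule SUP_upper) auto
  finally show ?thesis .
qed

lemma suminf_const_top_ennreal:
  assumes "\<And>k. ennreal c \<le> f k" "(c::real) > 0"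
  shows "suminf (f::nat \<Rightarrow> ennreal) = \<infinity>"
proof -
  have NC: "ennreal (real N * c) \<le> suminf f" for N
  proof -
    have "ennreal (real N * c) = (\<Sum>k<N. ennreal c)" using assms by (simp add: ennreal_mult ennreal_of_nat_eq_real_of_nat)
    also have "\<dots> \<le> sum f {..<N}" by (rule sum_mono) (use assms in auto)
    also have "\<dots> \<le> suminf f" unfolding suminf_eq_SUP by (rule SUP_upper) auto
    finally show ?thesis .
  qed
  show ?thesis
  proof (rule ccontr)
    assume "suminf f \<noteq> \<infinity>"
    then obtain x where x: "suminf f = ennreal x" "0 \<le> x"
      by (cases "suminf f") auto
    obtain N :: nat where "x < real N * c" using ex_less_of_nat_mult[OF assms(2)] by blast
    moreover have "real N * c \<le> x" using NC[of N] x assms(2)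
      by (simp add: ennreal_le_iff)
    ultimately show False by simp
  qed
qed

lemma dyadic_up:
  assumes "1 \<le> (x::real)"
  shows "\<exists>k::nat. 2^k \<le> x \<and> x < 2^(k+1)"
proof -
  obtain n where n: "x < 2^n" using real_arch_pow[of 2 x] by auto
  define k where "k = (LEAST k. x < 2^(k+1))"
  have ex: "x < 2^(n+1)" proof -
    have "(2::real)^n \<le> 2^(n+1)" by (rule power_increasing) auto
    then show ?thesis by (rule less_le_trans[OF n])
  qed
  have k1: "x < 2^(k+1)" unfolding k_def by (rule LeastI[of _ n], fact ex)
  have k2: "2^k \<le> x"
  proof (cases k)
    case 0 then show ?thesis using assms by simp
  next
    case (Suc j)
    have "\<not> x < 2^(j+1)"
    proof
      assume "x < 2^(j+1)"
      then have "k \<le> j" unfolding k_def by (rule Least_le)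
      then show False using Suc by simp
    qed
    then show ?thesis using Suc by simp
  qed
  show ?thesis using k1 k2 by blast
qed

lemma dyadic_down:
  assumes "0 < (x::real)" "x < 1"
  shows "\<exists>k::nat. (1/2)^(k+1) \<le> x \<and> x < (1/2)^k"
proof -
  obtain n where n: "(1/2::real)^n < x" using real_arch_pow_inv[of x "1/2"] assms by auto
  have ex: "(1/2::real)^(n+1) \<le> x"
  proof -
    have "(1/2::real)^(n+1) \<le> (1/2)^n" by (rule power_decreasing) auto
    then show ?thesis using n by linarith
  qed
  define k where "k = (LEAST k. (1/2::real)^(k+1) \<le> x)"
  have k1: "(1/2::real)^(k+1) \<le> x" unfolding k_def by (rule LeastI[of _ n], fact ex)
  have k2: "x < (1/2)^k"
  proof (cases k)
    case 0 then show ?thesis using assms by simp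
  next
    case (Suc j)
    have "\<not> (1/2::real)^(j+1) \<le> x"
    proof
      assume "(1/2::real)^(j+1) \<le> x"
      then have "k \<le> j" unfolding k_def by (rule Least_le)
      then show False using Suc by simp
    qed
    then show ?thesis using Suc by simp
  qed
  show ?thesis using k1 k2 by blast
qed

lemma powr_diff_bound:
  fixes a b s :: real
  assumes "0 < a" "0 < b" "0 < s"
  shows "\<bar>a powr (-s) - b powr (-s)\<bar> \<le> s * \<bar>a - b\<bar> * (min a b) powr (-s-1)"
proof -
  have main: "\<bar>p powr (-s) - q powr (-s)\<bar> \<le> s * \<bar>p - q\<bar> * p powr (-s-1)"
    if pq: "0 < p" "p \<le> q" for p q :: real
  proof (cases "p = q")
    case True then show ?thesis by simp
  next
    case False
    then have "p < q" using pq by simp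
    have "DERIV (\<lambda>t. t powr (-s)) x :> (-s * x powr (-s-1))" if "p \<le> x" "x \<le> q" for x
      using pq that by (auto intro!: derivative_eq_intros simp: powr_diff)
    from MVT2[OF \<open>p < q\<close> this] obtain \<xi> where xi: "p < \<xi>" "\<xi> < q"
      "q powr (-s) - p powr (-s) = (q - p) * (-s * \<xi> powr (-s-1))" by blast
    have "\<xi> powr (-s-1) \<le> p powr (-s-1)"
      using xi pq assms by (intro powr_mono2') auto
    have e: "p powr (-s) - q powr (-s) = s * (q - p) * \<xi> powr (-s-1)"
      using xi(3) by (simp add: algebra_simps)
    have "0 \<le> s * (q - p) * \<xi> powr (-s-1)" using assms \<open>p < q\<close> by simp
    then have "\<bar>p powr (-s) - q powr (-s)\<bar> = s * (q - p) * \<xi> powr (-s-1)"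
      using e by simp
    also have "\<dots> \<le> s * (q - p) * p powr (-s-1)"
      using \<open>\<xi> powr (-s-1) \<le> p powr (-s-1)\<close> assms \<open>p < q\<close>
      by (intro mult_left_mono) auto
    finally show ?thesis using \<open>p < q\<close> by simp
  qed
  show ?thesis
  proof (cases "a \<le> b")
    case True then show ?thesis using main[of a b] assms by (simp add: min_def)
  next
    case False then show ?thesis using main[of b a] assms by (simp add: min_def abs_minus_commute)
  qed
qed

lemma far_integral:
  fixes \<mu> :: "'a::euclidean_space measure"
  assumes sets: "sets \<mu> = sets borel"
    and bound: "\<And>w r. 0 < r \<Longrightarrow> emeasure \<mu> (ball w r) \<le> ennreal (M * r powr s)"
    and rho: "0 < \<rho>" and s: "0 < s" and M: "0 \<le> M"
  shows "(\<integral>\<^sup>+ y. ennreal (dist z y powr (-s-1)) * indicator (- ball z \<rho>) y \<partial>\<mu>)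
          \<le> ennreal (2 powr (s+1) * M / \<rho>)"
proof -
  define q :: "nat \<Rightarrow> real" where "q k = 2^k * \<rho>" for k
  have qpos: "q k > 0" for k using rho by (simp add: q_def)
  have meas: "f \<in> borel_measurable \<mu>" if "f \<in> borel_measurable borel" for f :: "'a \<Rightarrow> ennreal"
    using that by (simp add: measurable_cong_sets[OF sets refl])
  have pw: "ennreal (dist z y powr (-s-1)) * indicator (- ball z \<rho>) y
       \<le> (\<Sum>k. ennreal (q k powr (-s-1)) * indicator (ball z (2 * q k)) y)" for y
  proof (cases "y \<in> ball z \<rho>")
    case True then show ?thesis by simp
  next
    case False
    then have d: "\<rho> \<le> dist z y" by simp
    then have "1 \<le> dist z y / \<rho>" using rho by simp
    from dyadic_up[OF this] obtain k where k: "2^k \<le> dist z y / \<rho>" "dist z y / \<rho> < 2^(k+1)" by blast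
    have k1: "q k \<le> dist z y" using k rho by (simp add: q_def pos_le_divide_eq)
    have k2: "dist z y < 2 * q k" using k rho by (simp add: q_def pos_divide_less_eq)
    have "dist z y powr (-s-1) \<le> q k powr (-s-1)"
      using k1 qpos[of k] s by (intro powr_mono2') auto
    then have "ennreal (dist z y powr (-s-1)) * indicator (- ball z \<rho>) y
        \<le> ennreal (q k powr (-s-1)) * indicator (ball z (2 * q k)) y"
      using False k2 by (simp add: indicator_def)
    also have "\<dots> \<le> (\<Sum>k. ennreal (q k powr (-s-1)) * indicator (ball z (2 * q k)) y)"
      by (rule suminf_ge_term_ennreal)
    finally show ?thesis .
  qed
  have "(\<integral>\<^sup>+ y. ennreal (dist z y powr (-s-1)) * indicator (- ball z \<rho>) y \<partial>\<mu>)
      \<le> (\<integral>\<^sup>+ y. (\<Sum>k. ennreal (q k powr (-s-1)) * indicator (ball z (2 * q k)) y) \<partial>\<mu>)"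
    by (rule nn_integral_mono) (rule pw)
  also have "\<dots> = (\<Sum>k. \<integral>\<^sup>+ y. ennreal (q k powr (-s-1)) * indicator (ball z (2 * q k)) y \<partial>\<mu>)"
    by (intro nn_integral_suminf meas borel_measurable_times_ennreal borel_measurable_indicator borel_measurable_const) auto
  also have "\<dots> = (\<Sum>k. ennreal (q k powr (-s-1)) * emeasure \<mu> (ball z (2 * q k)))"
    by (intro suminf_cong nn_integral_cmult_indicator) (simp add: sets)
  also have "\<dots> \<le> (\<Sum>k. ennreal (2 powr s * M / \<rho> * (1/2)^k))"
  proof (intro suminf_le summableI)
    fix k
    have "ennreal (q k powr (-s-1)) * emeasure \<mu> (ball z (2 * q k))
        \<le> ennreal (q k powr (-s-1)) * ennreal (M * (2 * q k) powr s)"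
      by (intro mult_left_mono bound) (use qpos[of k] in auto)
    also have "\<dots> = ennreal (q k powr (-s-1) * (M * (2 * q k) powr s))"
      by (rule ennreal_mult[symmetric]) (use M in auto)
    also have "q k powr (-s-1) * (M * (2 * q k) powr s) = 2 powr s * M / \<rho> * (1/2)^k"
    proof -
      have "q k powr (-s-1) * (2 * q k) powr s = 2 powr s * (q k powr (-s-1) * q k powr s)"
        using qpos[of k] by (simp add: powr_mult)
      also have "q k powr (-s-1) * q k powr s = q k powr (-1)"
        using qpos[of k] by (simp add: powr_add[symmetric])
      also have "\<dots> = 1 / (2^k * \<rho>)" using qpos[of k] by (simp add: powr_minus q_def divide_inverse)
      finally show ?thesis by (simp add: field_simps power_one_over)
    qed
    finally show "ennreal (q k powr (-s-1)) * emeasure \<mu> (ball z (2 * q k))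
        \<le> ennreal (2 powr s * M / \<rho> * (1/2)^k)" .
  qed
  also have "\<dots> = ennreal (2 powr s * M / \<rho> * 2)"
  proof (rule suminf_ennreal_eq)
    show "0 \<le> 2 powr s * M / \<rho> * (1 / 2) ^ k" for k using M rho by simp
    show "(\<lambda>k. 2 powr s * M / \<rho> * (1 / 2) ^ k) sums (2 powr s * M / \<rho> * 2)"
      using sums_mult[OF geometric_sums[of "1/2::real"], of "2 powr s * M / \<rho>"] by simp
  qed
  also have "2 powr s * M / \<rho> * 2 = 2 powr (s+1) * M / \<rho>" by (simp add: powr_add)
  finally show ?thesis .
qed

lemma far_pointwise:
  assumes s: "s = real DIM('a) - a" "0 < s" and R: "0 < R" and x: "dist z x < R"
    and y: "y \<notin> ball z (2*R)"
  shows "riesz_kernel a (x::'a::euclidean_space) y \<le> riesz_kernel a z y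
           + ennreal (s * R * 2 powr (s+1) * dist z y powr (-s-1))"
    "riesz_kernel a z y \<le> riesz_kernel a x y
           + ennreal (s * R * 2 powr (s+1) * dist z y powr (-s-1))"
proof -
  have dzy: "2*R \<le> dist z y" using y by simp
  have dxy: "dist z y - R \<le> dist x y" using dist_triangle[of z y x] x by (simp add: dist_commute) 
  have dxy2: "dist x y \<le> dist z y + R" using dist_triangle[of x y z] x by (simp add: dist_commute)
  have pos: "0 < dist x y" "0 < dist z y" using dzy dxy R by auto
  have ne: "y \<noteq> x" "y \<noteq> z" using pos by auto
  have "\<bar>dist x y powr (-s) - dist z y powr (-s)\<bar>
      \<le> s * \<bar>dist x y - dist z y\<bar> * (min (dist x y) (dist z y)) powr (-s-1)"
    by (rule powr_diff_bound) (use pos s in auto)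
  also have "\<dots> \<le> s * R * ((dist z y / 2) powr (-s-1))"
  proof (rule mult_mono)
    show "s * \<bar>dist x y - dist z y\<bar> \<le> s * R" using dxy dxy2 s by (intro mult_left_mono) auto
    show "min (dist x y) (dist z y) powr (- s - 1) \<le> (dist z y / 2) powr (- s - 1)"
      using dxy dzy pos s R by (intro powr_mono2') auto
  qed (use s R in auto)
  also have "(dist z y / 2) powr (-s-1) = 2 powr (s+1) * dist z y powr (-s-1)"
  proof -
    have h: "2 powr (s+1) * 2 powr (-s-1) = (1::real)" by (simp add: powr_add[symmetric])
    show ?thesis using pos h by (simp add: powr_divide powr_minus_divide divide_simps powr_minus)
  qed
  finally have F: "\<bar>dist x y powr (-s) - dist z y powr (-s)\<bar> \<le> s * R * 2 powr (s+1) * dist z y powr (-s-1)"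
    by (simp add: mult.assoc)
  have "dist x y powr (-s) \<le> dist z y powr (-s) + s * R * 2 powr (s+1) * dist z y powr (-s-1)"
    using F by linarith
  then have "ennreal (dist x y powr (-s)) \<le> ennreal (dist z y powr (-s)) + ennreal (s * R * 2 powr (s+1) * dist z y powr (-s-1))"
    using s R by (simp add: ennreal_plus[symmetric] del: ennreal_plus)
  then show "riesz_kernel a (x::'a::euclidean_space) y \<le> riesz_kernel a z y
           + ennreal (s * R * 2 powr (s+1) * dist z y powr (-s-1))"
    using ne s unfolding riesz_kernel_def by (simp add: dist_commute)
  have "dist z y powr (-s) \<le> dist x y powr (-s) + s * R * 2 powr (s+1) * dist z y powr (-s-1)"
    using F by linarith
  then have "ennreal (dist z y powr (-s)) \<le> ennreal (dist x y powr (-s)) + ennreal (s * R * 2 powr (s+1) * dist z y powr (-s-1))"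
    using s R by (simp add: ennreal_plus[symmetric] del: ennreal_plus)
  then show "riesz_kernel a z y \<le> riesz_kernel a x y
           + ennreal (s * R * 2 powr (s+1) * dist z y powr (-s-1))"
    using ne s unfolding riesz_kernel_def by (simp add: dist_commute)
qed

lemma far_compare_gen:
  fixes \<mu> :: "'a::euclidean_space measure"
  assumes sets: "sets \<mu> = sets borel"
    and bound: "\<And>w r. 0 < r \<Longrightarrow> emeasure \<mu> (ball w r) \<le> ennreal (M * r powr s)"
    and s: "s = real DIM('a) - a" "0 < s" and R: "0 < R" and M: "0 \<le> M"
    and pw: "\<And>y. y \<notin> ball z (2*R) \<Longrightarrow> riesz_kernel a p1 y \<le> riesz_kernel a p2 y
           + ennreal (s * R * 2 powr (s+1) * dist z y powr (-s-1))"
  shows "(\<integral>\<^sup>+ y. riesz_kernel a p1 y * indicator (- ball z (2*R)) y \<partial>\<mu>)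
     \<le> (\<integral>\<^sup>+ y. riesz_kernel a p2 y * indicator (- ball z (2*R)) y \<partial>\<mu>) + ennreal (s * 2 powr (2 * s + 1) * M)"
proof -
  have meas: "f \<in> borel_measurable \<mu>" if "f \<in> borel_measurable borel" for f :: "'a \<Rightarrow> ennreal"
    using that by (simp add: measurable_cong_sets[OF sets refl])
  have "(\<integral>\<^sup>+ y. riesz_kernel a p1 y * indicator (- ball z (2*R)) y \<partial>\<mu>)
     \<le> (\<integral>\<^sup>+ y. riesz_kernel a p2 y * indicator (- ball z (2*R)) y
          + ennreal (s * R * 2 powr (s+1)) * (ennreal (dist z y powr (-s-1)) * indicator (- ball z (2*R)) y) \<partial>\<mu>)"
  proof (intro nn_integral_mono)
    fix y
    show "riesz_kernel a p1 y * indicator (- ball z (2*R)) y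
       \<le> riesz_kernel a p2 y * indicator (- ball z (2*R)) y
          + ennreal (s * R * 2 powr (s+1)) * (ennreal (dist z y powr (-s-1)) * indicator (- ball z (2*R)) y)"
    proof (cases "y \<in> ball z (2*R)")
      case True then show ?thesis by simp
    next
      case False
      then show ?thesis using pw[OF False] s R
        by (simp add: ennreal_mult[symmetric] mult.assoc)
    qed
  qed
  also have "\<dots> = (\<integral>\<^sup>+ y. riesz_kernel a p2 y * indicator (- ball z (2*R)) y \<partial>\<mu>)
     + ennreal (s * R * 2 powr (s+1)) * (\<integral>\<^sup>+ y. ennreal (dist z y powr (-s-1)) * indicator (- ball z (2*R)) y \<partial>\<mu>)"
  proof -
    have m1: "(\<lambda>y. riesz_kernel a p2 y * indicator (- ball z (2*R)) y) \<in> borel_measurable \<mu>"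
      by (intro meas borel_measurable_times_ennreal kernel_measurable borel_measurable_indicator) auto
    have m2: "(\<lambda>y. ennreal (dist z y powr (-s-1)) * indicator (- ball z (2*R)) y) \<in> borel_measurable \<mu>"
      by (intro meas borel_measurable_times_ennreal borel_measurable_indicator measurable_compose[OF _ measurable_ennreal] powr_real_measurable borel_measurable_dist borel_measurable_const measurable_ident_sets) auto
    have m3: "(\<lambda>y. ennreal (s * R * 2 powr (s+1)) * (ennreal (dist z y powr (-s-1)) * indicator (- ball z (2*R)) y)) \<in> borel_measurable \<mu>"
      by (intro borel_measurable_times_ennreal borel_measurable_const m2)
    show ?thesis
      by (simp only: nn_integral_add[OF m1 m3] nn_integral_cmult[OF m2])
  qed
  also have "\<dots> \<le> (\<integral>\<^sup>+ y. riesz_kernel a p2 y * indicator (- ball z (2*R)) y \<partial>\<mu>)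
     + ennreal (s * R * 2 powr (s+1)) * ennreal (2 powr (s+1) * M / (2*R))"
    by (intro add_left_mono mult_left_mono far_integral[OF sets bound]) (use R s M in auto)
  also have "ennreal (s * R * 2 powr (s+1)) * ennreal (2 powr (s+1) * M / (2*R)) = ennreal (s * 2 powr (2 * s + 1) * M)"
  proof -
    have "s * R * 2 powr (s+1) * (2 powr (s+1) * M / (2*R)) = s * (2 powr (s+1) * 2 powr (s+1) / 2) * M"
      using R by (simp add: field_simps)
    also have "2 powr (s+1) * 2 powr (s+1) / 2 = 2 powr (2 * s + 1)"
    proof -
      have "2 powr (s+1) * 2 powr (s+1) = (2::real) powr (1 + (2 * s + 1))"
        by (simp add: powr_add[symmetric] algebra_simps)
      also have "\<dots> = 2 * 2 powr (2 * s + 1)" by (simp add: powr_add)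
      finally show ?thesis by simp
    qed
    finally show ?thesis using s R M by (simp add: ennreal_mult[symmetric])
  qed
  finally show ?thesis .
qed

lemma far_compare:
  fixes \<mu> :: "'a::euclidean_space measure"
  assumes sets: "sets \<mu> = sets borel"
    and bound: "\<And>w r. 0 < r \<Longrightarrow> emeasure \<mu> (ball w r) \<le> ennreal (M * r powr s)"
    and s: "s = real DIM('a) - a" "0 < s" and R: "0 < R" and M: "0 \<le> M"
    and x: "dist z x < R"
  shows "(\<integral>\<^sup>+ y. riesz_kernel a x y * indicator (- ball z (2*R)) y \<partial>\<mu>)
     \<le> (\<integral>\<^sup>+ y. riesz_kernel a z y * indicator (- ball z (2*R)) y \<partial>\<mu>) + ennreal (s * 2 powr (2 * s + 1) * M)"
    "(\<integral>\<^sup>+ y. riesz_kernel a z y * indicator (- ball z (2*R)) y \<partial>\<mu>)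
     \<le> (\<integral>\<^sup>+ y. riesz_kernel a x y * indicator (- ball z (2*R)) y \<partial>\<mu>) + ennreal (s * 2 powr (2 * s + 1) * M)"
  by (rule far_compare_gen[OF sets bound s R M]; use far_pointwise[OF s R x] in blast)+

lemma half_pow_powr: "((1/2::real)^k) powr d = ((1/2) powr d)^k"
proof -
  have "((1/2::real)^k) powr d = ((1/2) powr real k) powr d" by (simp add: powr_realpow)
  also have "\<dots> = (1/2) powr (real k * d)" by (simp add: powr_powr)
  also have "\<dots> = ((1/2) powr d) powr real k" by (simp add: powr_powr mult.commute)
  also have "\<dots> = ((1/2) powr d)^k" by (simp add: powr_realpow)
  finally show ?thesis .
qed

lemma local_pointwise:
  assumes s: "s = real DIM('a) - a" "0 < s" and rho: "0 < \<rho>" and x: "dist z x < \<rho>"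
  shows "riesz_kernel a (x::'a::euclidean_space) y * indicator (ball z \<rho>) y
     \<le> (\<Sum>k. ennreal (2 powr s * (2*\<rho>*(1/2)^k) powr (-s)) * indicator (ball x (2*\<rho>*(1/2)^k) \<inter> ball z \<rho>) y)"
proof -
  define rk :: "nat \<Rightarrow> real" where "rk k = 2*\<rho>*(1/2)^k" for k
  have rkpos: "0 < rk k" for k using rho by (simp add: rk_def)
  show ?thesis
  proof (cases "y \<in> ball z \<rho>")
    case False then show ?thesis by simp
  next
    case yin: True
    show ?thesis
    proof (cases "y = x")
      case True
      have "(\<Sum>k. ennreal (2 powr s * (2*\<rho>*(1/2)^k) powr (-s)) * indicator (ball x (2*\<rho>*(1/2)^k) \<inter> ball z \<rho>) y) = \<infinity>"
      proof (rule suminf_const_top_ennreal)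
        show "0 < 2 powr s * (2*\<rho>) powr (-s)" using rho by simp
        fix k
        have "(2*\<rho>) powr (-s) \<le> (2*\<rho>*(1/2)^k) powr (-s)"
          using rho s by (intro powr_mono2') (auto simp: power_le_one)
        then show "ennreal (2 powr s * (2*\<rho>) powr (-s)) \<le> ennreal (2 powr s * (2*\<rho>*(1/2)^k) powr (-s)) * indicator (ball x (2*\<rho>*(1/2)^k) \<inter> ball z \<rho>) y"
          using True yin rho by (simp add: indicator_def)
      qed
      then show ?thesis by simp
    next
      case False
      have d0: "0 < dist x y" using False by simp
      have d1: "dist x y < 2*\<rho>" using dist_triangle[of x y z] x yin by (simp add: dist_commute)
      obtain k where k: "(1/2)^(k+1) \<le> dist x y / (2*\<rho>)" "dist x y / (2*\<rho>) < (1/2)^k"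
        using dyadic_down[of "dist x y / (2*\<rho>)"] d0 d1 rho by auto
      have k1: "rk k / 2 \<le> dist x y" using k(1) rho by (simp add: rk_def pos_le_divide_eq field_simps)
      have k2: "dist x y < rk k" using k(2) rho by (simp add: rk_def pos_divide_less_eq field_simps)
      have "dist x y powr (-s) \<le> (rk k / 2) powr (-s)"
        using k1 rkpos[of k] s by (intro powr_mono2') auto
      also have "(rk k / 2) powr (-s) = 2 powr s * rk k powr (-s)"
        using rkpos[of k] by (simp add: powr_divide powr_minus divide_simps)
      finally have le: "dist x y powr (-s) \<le> 2 powr s * rk k powr (-s)" .
      have "riesz_kernel a x y * indicator (ball z \<rho>) y = ennreal (dist x y powr (-s))"
        using False yin s unfolding riesz_kernel_def by simp
      also have "\<dots> \<le> ennreal (2 powr s * rk k powr (-s)) * indicator (ball x (rk k) \<inter> ball z \<rho>) y"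
        using le k2 yin by (simp add: indicator_def)
      also have "\<dots> \<le> (\<Sum>k. ennreal (2 powr s * rk k powr (-s)) * indicator (ball x (rk k) \<inter> ball z \<rho>) y)"
        by (rule suminf_ge_term_ennreal)
      finally show ?thesis by (simp add: rk_def)
    qed
  qed
qed

lemma local_integral:
  fixes \<mu> :: "'a::euclidean_space measure"
  assumes sets: "sets \<mu> = sets borel"
    and s: "s = real DIM('a) - a" "0 < s" and rho: "0 < \<rho>" and x: "dist z x < \<rho>"
  shows "(\<integral>\<^sup>+ y. riesz_kernel a x y * indicator (ball z \<rho>) y \<partial>\<mu>)
     \<le> (\<Sum>k. ennreal (2 powr s * (2*\<rho>*(1/2)^k) powr (-s)) * emeasure \<mu> (ball x (2*\<rho>*(1/2)^k) \<inter> ball z \<rho>))"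
proof -
  have meas: "f \<in> borel_measurable \<mu>" if "f \<in> borel_measurable borel" for f :: "'a \<Rightarrow> ennreal"
    using that by (simp add: measurable_cong_sets[OF sets refl])
  have "(\<integral>\<^sup>+ y. riesz_kernel a x y * indicator (ball z \<rho>) y \<partial>\<mu>)
     \<le> (\<integral>\<^sup>+ y. (\<Sum>k. ennreal (2 powr s * (2*\<rho>*(1/2)^k) powr (-s)) * indicator (ball x (2*\<rho>*(1/2)^k) \<inter> ball z \<rho>) y) \<partial>\<mu>)"
    by (rule nn_integral_mono) (rule local_pointwise[OF s rho x])
  also have "\<dots> = (\<Sum>k. \<integral>\<^sup>+ y. ennreal (2 powr s * (2*\<rho>*(1/2)^k) powr (-s)) * indicator (ball x (2*\<rho>*(1/2)^k) \<inter> ball z \<rho>) y \<partial>\<mu>)"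
    by (intro nn_integral_suminf meas borel_measurable_times_ennreal borel_measurable_indicator borel_measurable_const) auto
  also have "\<dots> = (\<Sum>k. ennreal (2 powr s * (2*\<rho>*(1/2)^k) powr (-s)) * emeasure \<mu> (ball x (2*\<rho>*(1/2)^k) \<inter> ball z \<rho>))"
    by (intro suminf_cong nn_integral_cmult_indicator) (simp add: sets)
  finally show ?thesis .
qed

lemma ck_rk_identity:
  fixes \<rho> s d :: real
  assumes rho: "0 < \<rho>" and s: "0 < s"
  shows "2 powr s * (2*\<rho>*(1/2)^k) powr (-s) * ((2*\<rho>*(1/2)^k) powr (s+d) * \<rho> powr (-d))
         = 2 powr (s+d) * ((1/2) powr d)^k"
proof -
  define r where "r = 2*\<rho>*(1/2::real)^k"
  have r: "0 < r" using rho by (simp add: r_def)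
  have "r powr (-s) * r powr (s+d) = r powr d" using r by (simp add: powr_add[symmetric])
  moreover have "r powr d * \<rho> powr (-d) = (r / \<rho>) powr d"
  proof -
    have "(r/\<rho>) powr d = r powr d / \<rho> powr d" using r rho by (simp add: powr_divide)
    then show ?thesis by (simp add: powr_minus divide_inverse)
  qed
  moreover have "r / \<rho> = 2 * (1/2)^k" using rho by (simp add: r_def)
  moreover have "(2 * (1/2::real)^k) powr d = 2 powr d * ((1/2) powr d)^k"
    by (simp add: powr_mult half_pow_powr)
  ultimately have "2 powr s * r powr (-s) * (r powr (s+d) * \<rho> powr (-d)) = 2 powr s * (2 powr d * ((1/2) powr d)^k)"
    by (metis mult.assoc)
  also have "\<dots> = 2 powr (s+d) * ((1/2) powr d)^k" by (simp add: powr_add)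
  finally show ?thesis by (simp add: r_def)
qed

lemma weak_exists:
  fixes mp mn :: "'a::euclidean_space measure"
  assumes setsp: "sets mp = sets borel" and setsn: "sets mn = sets borel"
    and s: "s = real DIM('a) - a" "0 < s" and rho: "0 < \<rho>" and x: "dist z x < \<rho>"
    and t: "0 < t" and d: "0 < d"
    and big: "ennreal t < (\<integral>\<^sup>+ y. riesz_kernel a x y * indicator (ball z \<rho>) y \<partial>mp)
                        + (\<integral>\<^sup>+ y. riesz_kernel a x y * indicator (ball z \<rho>) y \<partial>mn)"
  shows "\<exists>r. 0 < r \<and> r \<le> 2*\<rho> \<and>
     ennreal (t * (1 - (1/2) powr d) / 2 powr (s+d) * r powr (s+d) * \<rho> powr (-d))
       < emeasure mp (ball x r \<inter> ball z \<rho>) + emeasure mn (ball x r \<inter> ball z \<rho>)"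
proof (rule ccontr)
  define lam where "lam = t * (1 - (1/2) powr d) / 2 powr (s+d)"
  define rk :: "nat \<Rightarrow> real" where "rk k = 2*\<rho>*(1/2)^k" for k
  define ck where "ck k = 2 powr s * rk k powr (-s)" for k
  define m where "m k = emeasure mp (ball x (rk k) \<inter> ball z \<rho>) + emeasure mn (ball x (rk k) \<inter> ball z \<rho>)" for k
  have q: "(1/2::real) powr d < 1"
  proof -
    have "1 < (2::real) powr d" using d by (simp add: gr_one_powr)
    moreover have "(1/2::real) powr d = 1 / 2 powr d" by (simp add: powr_divide)
    ultimately show ?thesis by simp
  qed
  have lam: "0 < lam" using t q by (simp add: lam_def)
  assume nt: "\<not> ?thesis"
  have mk: "m k \<le> ennreal (lam * rk k powr (s+d) * \<rho> powr (-d))" for k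
  proof -
    have "0 < rk k" "rk k \<le> 2*\<rho>" using rho by (auto simp: rk_def power_le_one)
    moreover have "\<not> (0 < rk k \<and> rk k \<le> 2*\<rho> \<and> ennreal (lam * rk k powr (s+d) * \<rho> powr (-d)) < m k)"
      using nt unfolding lam_def m_def by blast
    ultimately show ?thesis by (auto simp: not_less)
  qed
  have "ennreal t < (\<Sum>k. ennreal (ck k) * emeasure mp (ball x (rk k) \<inter> ball z \<rho>))
                  + (\<Sum>k. ennreal (ck k) * emeasure mn (ball x (rk k) \<inter> ball z \<rho>))"
    using big local_integral[OF setsp s rho x] local_integral[OF setsn s rho x]
    unfolding ck_def rk_def by (meson add_mono order_less_le_trans)
  also have "\<dots> = (\<Sum>k. ennreal (ck k) * m k)"
    by (subst suminf_add) (auto intro: summableI simp: m_def distrib_left)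
  also have "\<dots> \<le> (\<Sum>k. ennreal (2 powr (s+d) * lam * ((1/2) powr d)^k))"
  proof (intro suminf_le summableI)
    fix k
    have "ennreal (ck k) * m k \<le> ennreal (ck k) * ennreal (lam * rk k powr (s+d) * \<rho> powr (-d))"
      by (intro mult_left_mono mk) auto
    also have "\<dots> = ennreal (ck k * (lam * rk k powr (s+d) * \<rho> powr (-d)))"
      by (rule ennreal_mult[symmetric]) (use lam in \<open>auto simp: ck_def\<close>)
    also have "ck k * (lam * rk k powr (s+d) * \<rho> powr (-d)) = lam * (ck k * (rk k powr (s+d) * \<rho> powr (-d)))"
      by (simp add: algebra_simps)
    also have "\<dots> = 2 powr (s+d) * lam * ((1/2) powr d)^k"
      unfolding ck_def rk_def using ck_rk_identity[OF rho s(2), of k d] by simp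
    finally show "ennreal (ck k) * m k \<le> ennreal (2 powr (s+d) * lam * ((1/2) powr d)^k)" .
  qed
  also have "\<dots> = ennreal (2 powr (s+d) * lam * (1 / (1 - (1/2) powr d)))"
  proof (rule suminf_ennreal_eq)
    show "0 \<le> 2 powr (s+d) * lam * ((1/2) powr d)^k" for k using lam by simp
    show "(\<lambda>k. 2 powr (s+d) * lam * ((1/2) powr d)^k) sums (2 powr (s+d) * lam * (1 / (1 - (1/2) powr d)))"
      by (rule sums_mult[OF geometric_sums]) (use q in auto)
  qed
  also have "2 powr (s+d) * lam * (1 / (1 - (1/2) powr d)) = t"
  proof -
    have A: "(2::real) powr (s+d) \<noteq> 0" by simp
    have B: "1 - (1/2::real) powr d \<noteq> 0" using q d by simp
    show ?thesis unfolding lam_def using A B by (simp add: field_simps)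
  qed
  finally show False by simp
qed

lemma ball_term:
  fixes r \<rho> lam d s v M b :: real
  assumes r: "0 < r" and rho: "0 < \<rho>" and lam: "0 < lam" and b: "b = s + 2*d"
    and h1: "lam * r powr (s+d) * \<rho> powr (-d) < v" and h2: "v \<le> M * r powr s"
  shows "(5*r) powr b \<le> 5 powr b * M * \<rho> powr (2*d) / lam^2 * v"
proof -
  have e1: "r powr (s+d) = r powr s * r powr d" by (simp add: powr_add)
  have e2: "\<rho> powr (-d) * \<rho> powr d = 1" using rho by (simp add: powr_add[symmetric])
  have rs: "0 < r powr s" using r by simp
  have pd: "0 < \<rho> powr d" using rho by simp
  have A: "r powr (s+d) < v * \<rho> powr d / lam"
  proof -
    have "lam * r powr (s+d) = lam * r powr (s+d) * \<rho> powr (-d) * \<rho> powr d"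
      using e2 by (simp add: mult.assoc)
    also have "\<dots> < v * \<rho> powr d" using h1 pd by (intro mult_strict_right_mono) auto
    finally show ?thesis using lam by (simp add: pos_less_divide_eq mult.commute)
  qed
  have B: "r powr d < M * \<rho> powr d / lam"
  proof -
    have "lam * r powr s * r powr d * \<rho> powr (-d) < M * r powr s"
      using h1 h2 e1 by (simp add: mult.assoc)
    then have "r powr s * (lam * r powr d * \<rho> powr (-d)) < r powr s * M"
      by (simp add: algebra_simps)
    then have "lam * r powr d * \<rho> powr (-d) < M" using rs by simp
    then have "lam * r powr d * \<rho> powr (-d) * \<rho> powr d < M * \<rho> powr d"
      using pd by (intro mult_strict_right_mono) auto
    then have "lam * r powr d < M * \<rho> powr d" using e2 by (simp add: mult.assoc)
    then show ?thesis using lam by (simp add: pos_less_divide_eq mult.commute)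
  qed
  have "r powr b = r powr (s+d) * r powr d" using b by (simp add: powr_add[symmetric] algebra_simps)
  also have "\<dots> \<le> (v * \<rho> powr d / lam) * (M * \<rho> powr d / lam)"
  proof (rule mult_mono)
    show "0 \<le> v * \<rho> powr d / lam" using A powr_ge_zero[of r "s+d"] by linarith
  qed (use A B r in auto)
  also have "\<dots> = M * \<rho> powr (2*d) / lam^2 * v"
    by (simp add: power2_eq_square powr_add[symmetric] field_simps)
  finally have "r powr b \<le> M * \<rho> powr (2*d) / lam^2 * v" .
  then have "5 powr b * r powr b \<le> 5 powr b * (M * \<rho> powr (2*d) / lam^2 * v)"
    by (intro mult_left_mono) auto
  then show ?thesis using r by (simp add: powr_mult mult.assoc)
qed

lemma vitali_content:
  fixes mp mn :: "'a::euclidean_space measure" and E G :: "'a set"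
  assumes setsp: "sets mp = sets borel" and setsn: "sets mn = sets borel" and G: "G \<in> sets borel"
    and tot: "emeasure mp G + emeasure mn G \<le> ennreal (M * \<rho> powr s)"
    and rad: "\<And>x. x \<in> E \<Longrightarrow> \<exists>r. 0 < r \<and> r \<le> B \<and>
        ennreal (lam * r powr (s+d) * \<rho> powr (-d)) < emeasure mp (ball x r \<inter> G) + emeasure mn (ball x r \<inter> G) \<and>
        emeasure mp (ball x r \<inter> G) + emeasure mn (ball x r \<inter> G) \<le> ennreal (M * r powr s)"
    and lam: "0 < lam" and rho: "0 < \<rho>" and M: "0 \<le> M" and b: "b = s + 2*d" and bpos: "0 < b"
  shows "hcontent b E \<le> ennreal (omega_const b * 5 powr b * M^2 * \<rho> powr b / lam^2)"
proof -
  define P where "P x r \<longleftrightarrow> 0 < r \<and> r \<le> B \<and>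
        ennreal (lam * r powr (s+d) * \<rho> powr (-d)) < emeasure mp (ball x r \<inter> G) + emeasure mn (ball x r \<inter> G) \<and>
        emeasure mp (ball x r \<inter> G) + emeasure mn (ball x r \<inter> G) \<le> ennreal (M * r powr s)" for x r
  have "\<forall>x\<in>E. \<exists>r. P x r" using rad unfolding P_def by blast
  then obtain rd where rd: "\<And>x. x \<in> E \<Longrightarrow> P x (rd x)" by (metis bchoice)
  have cov: "E \<subseteq> (\<Union>i\<in>E. ball (id i) (rd i))" using rd by (auto simp: P_def)
  obtain C where C: "countable C" "C \<subseteq> E"
     "pairwise (\<lambda>i j. disjnt (ball (id i) (rd i)) (ball (id j) (rd j))) C"
     "E \<subseteq> (\<Union>i\<in>C. ball (id i) (5 * rd i))"
    by (rule Vitali_covering_lemma_balls[OF cov, of B]) (use rd in \<open>auto simp: P_def\<close>)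
  define g where "g n = (if n \<in> to_nat_on C ` C then Some (from_nat_into C n) else None)" for n
  have g1: "g (to_nat_on C i) = Some i" if "i \<in> C" for i
    using that C(1) by (auto simp: g_def from_nat_into_to_nat_on)
  have g2: "i \<in> C \<and> to_nat_on C i = n" if "g n = Some i" for n i
  proof -
    from that have "n \<in> to_nat_on C ` C" "i = from_nat_into C n" by (auto simp: g_def split: if_splits)
    then obtain j where j: "j \<in> C" "n = to_nat_on C j" by auto
    then have "i = j" using \<open>i = from_nat_into C n\<close> C(1) by (simp add: from_nat_into_to_nat_on)
    then show ?thesis using j by simp
  qed
  define cx where "cx n = (case g n of Some i \<Rightarrow> i | None \<Rightarrow> undefined)" for n
  define cr where "cr n = (case g n of Some i \<Rightarrow> rd i | None \<Rightarrow> 0)" for n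
  have cr0: "0 \<le> cr n" for n
  proof (cases "g n")
    case (Some i)
    then have "i \<in> E" using g2 C(2) by blast
    then show ?thesis using rd[of i] Some by (simp add: cr_def P_def)
  qed (simp add: cr_def)
  have cover: "E \<subseteq> (\<Union>n. ball (cx n) (5 * cr n))"
  proof
    fix x assume "x \<in> E"
    then obtain i where i: "i \<in> C" "x \<in> ball i (5 * rd i)" using C(4) by auto
    then show "x \<in> (\<Union>n. ball (cx n) (5 * cr n))"
      using g1[OF i(1)] by (auto simp: cx_def cr_def intro!: exI[of _ "to_nat_on C i"])
  qed
  define K where "K = omega_const b * 5 powr b * M * \<rho> powr (2*d) / lam^2"
  have K0: "0 \<le> K" using omega_pos[of b] bpos M lam by (simp add: K_def)
  define nu where "nu n = emeasure mp (ball (cx n) (cr n) \<inter> G) + emeasure mn (ball (cx n) (cr n) \<inter> G)" for n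
  have termb: "ennreal (omega_const b * (5 * cr n) powr b) \<le> ennreal K * nu n" for n
  proof (cases "g n")
    case None
    then show ?thesis by (simp add: cr_def)
  next
    case (Some i)
    with g2 have iC: "i \<in> C" by blast
    then have Pi: "P i (rd i)" using rd C(2) by blast
    have cxi: "cx n = i" "cr n = rd i" using Some by (auto simp: cx_def cr_def)
    have "nu n \<le> ennreal (M * rd i powr s)" using Pi cxi unfolding P_def nu_def by simp
    then have fin: "nu n \<noteq> \<infinity>" using neq_top_trans[OF ennreal_neq_top] by (metis infinity_ennreal_def)
    then obtain v where v: "nu n = ennreal v" "0 \<le> v" by (cases "nu n") auto
    have h1: "lam * rd i powr (s+d) * \<rho> powr (-d) < v"
    proof -
      have "ennreal (lam * rd i powr (s+d) * \<rho> powr (-d)) < ennreal v" using Pi cxi v unfolding P_def nu_def by simp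
      moreover have "0 \<le> lam * rd i powr (s+d) * \<rho> powr (-d)" using lam by simp
      ultimately show ?thesis by (simp add: ennreal_less_iff)
    qed
    have h2: "v \<le> M * rd i powr s"
    proof -
      have "ennreal v \<le> ennreal (M * rd i powr s)" using Pi cxi v unfolding P_def nu_def by simp
      then show ?thesis using M by (simp add: ennreal_le_iff)
    qed
    have "(5 * rd i) powr b \<le> 5 powr b * M * \<rho> powr (2*d) / lam^2 * v"
      by (rule ball_term[OF _ rho lam b h1 h2]) (use Pi in \<open>auto simp: P_def\<close>)
    then have "omega_const b * (5 * rd i) powr b \<le> K * v"
      using omega_pos[of b] bpos unfolding K_def
      by (metis (no_types, opaque_lifting) less_imp_le mult.assoc mult_left_mono times_divide_eq_right)
    then show ?thesis using cxi v K0 by (simp add: ennreal_mult[symmetric])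
  qed
  have "hcontent b E \<le> (\<Sum>n. ennreal (omega_const b * (5 * cr n) powr b))"
    by (rule hcontent_cover_le) (use cr0 cover in auto)
  also have "\<dots> \<le> (\<Sum>n. ennreal K * nu n)" by (intro suminf_le summableI termb)
  also have "\<dots> = ennreal K * (\<Sum>n. nu n)" by (rule ennreal_suminf_cmult)
  also have "(\<Sum>n. nu n) = emeasure mp (\<Union>n. ball (cx n) (cr n) \<inter> G) + emeasure mn (\<Union>n. ball (cx n) (cr n) \<inter> G)"
  proof -
    have disj: "disjoint_family (\<lambda>n. ball (cx n) (cr n) \<inter> G)"
      unfolding disjoint_family_on_def
    proof (intro ballI impI)
      fix n m :: nat assume "n \<in> UNIV" "m \<in> UNIV" "n \<noteq> m"
      show "(ball (cx n) (cr n) \<inter> G) \<inter> (ball (cx m) (cr m) \<inter> G) = {}"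
      proof (cases "g n")
        case None then show ?thesis by (simp add: cr_def)
      next
        case (Some i)
        show ?thesis
        proof (cases "g m")
          case None then show ?thesis by (simp add: cr_def)
        next
          case (Some j)
          have "i \<in> C" "j \<in> C" "i \<noteq> j" using g2 \<open>g n = Some i\<close> Some \<open>n \<noteq> m\<close> by metis+
          then have "disjnt (ball i (rd i)) (ball j (rd j))" using C(3) by (auto simp: pairwise_def)
          then show ?thesis using \<open>g n = Some i\<close> Some by (auto simp: cx_def cr_def disjnt_def)
        qed
      qed
    qed
    have rng: "range (\<lambda>n. ball (cx n) (cr n) \<inter> G) \<subseteq> sets borel" using G by auto
    show ?thesis unfolding nu_def
      by (subst suminf_add[symmetric]) (auto intro: summableI simp: suminf_emeasure[OF _ disj] setsp setsn rng)
  qed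
  also have "\<dots> \<le> emeasure mp G + emeasure mn G"
    by (intro add_mono emeasure_mono) (auto simp: setsp setsn G)
  also have "ennreal K * \<dots> \<le> ennreal K * ennreal (M * \<rho> powr s)" by (intro mult_left_mono tot) auto
  also have "ennreal K * ennreal (M * \<rho> powr s) = ennreal (omega_const b * 5 powr b * M^2 * \<rho> powr b / lam^2)"
  proof -
    have "K * (M * \<rho> powr s) = omega_const b * 5 powr b * M^2 * (\<rho> powr (2*d) * \<rho> powr s) / lam^2"
      by (simp add: K_def power2_eq_square field_simps)
    also have "\<rho> powr (2*d) * \<rho> powr s = \<rho> powr b" using b by (simp add: powr_add[symmetric] add.commute)
    finally show ?thesis using K0 M rho by (simp add: ennreal_mult[symmetric])
  qed
  finally show ?thesis by (simp add: mult_left_mono)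
qed

lemma split_kernel:
  fixes \<mu> :: "'a::euclidean_space measure"
  assumes sets: "sets \<mu> = sets borel" and that: "B \<in> sets borel"
  shows "(\<integral>\<^sup>+ y. riesz_kernel a x y \<partial>\<mu>) = (\<integral>\<^sup>+ y. riesz_kernel a x y * indicator B y \<partial>\<mu>)
          + (\<integral>\<^sup>+ y. riesz_kernel a x y * indicator (- B) y \<partial>\<mu>)"
proof -
  have meas: "f \<in> borel_measurable \<mu>" if "f \<in> borel_measurable borel" for f :: "'a \<Rightarrow> ennreal"
    using that by (simp add: measurable_cong_sets[OF sets refl])
  have m1: "(\<lambda>y. riesz_kernel a x y * indicator B y) \<in> borel_measurable \<mu>"
    by (intro meas borel_measurable_times_ennreal kernel_measurable borel_measurable_indicator) (use that in auto)
  have m2: "(\<lambda>y. riesz_kernel a x y * indicator (- B) y) \<in> borel_measurable \<mu>"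
    by (intro meas borel_measurable_times_ennreal kernel_measurable borel_measurable_indicator) (use that in auto)
  have "(\<integral>\<^sup>+ y. riesz_kernel a x y \<partial>\<mu>) = (\<integral>\<^sup>+ y. riesz_kernel a x y * indicator B y + riesz_kernel a x y * indicator (- B) y \<partial>\<mu>)"
    by (intro nn_integral_cong) (auto simp: indicator_def)
  also have "\<dots> = (\<integral>\<^sup>+ y. riesz_kernel a x y * indicator B y \<partial>\<mu>) + (\<integral>\<^sup>+ y. riesz_kernel a x y * indicator (- B) y \<partial>\<mu>)"
    by (rule nn_integral_add[OF m1 m2])
  finally show ?thesis .
qed

lemma ennreal_fin: "(e::ennreal) < \<infinity> \<Longrightarrow> e = ennreal (enn2real e) \<and> 0 \<le> enn2real e"
  by (simp add: less_top[symmetric])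

lemma ennreal_le_add_real:
  assumes "ennreal x \<le> ennreal y + ennreal K" "0 \<le> x" "0 \<le> y" "0 \<le> K"
  shows "x \<le> y + K"
  using assms by (simp add: ennreal_plus[symmetric] del: ennreal_plus)

lemma pointwise_bound:
  fixes mp mn :: "'a::euclidean_space measure"
  assumes setsp: "sets mp = sets borel" and setsn: "sets mn = sets borel"
    and boundp: "\<And>w r. 0 < r \<Longrightarrow> emeasure mp (ball w r) \<le> ennreal (M * r powr s)"
    and boundn: "\<And>w r. 0 < r \<Longrightarrow> emeasure mn (ball w r) \<le> ennreal (M * r powr s)"
    and s: "s = real DIM('a) - a" "0 < s" and R: "0 < R" and M: "0 \<le> M"
    and x: "dist z x < R"
    and gam: "0 < riesz_const (real DIM('a)) a"
  defines "Fp \<equiv> \<lambda>w. (\<integral>\<^sup>+ y. riesz_kernel a w y * indicator (- ball z (2*R)) y \<partial>mp)"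
    and "Fn \<equiv> \<lambda>w. (\<integral>\<^sup>+ y. riesz_kernel a w y * indicator (- ball z (2*R)) y \<partial>mn)"
    and "LocP \<equiv> (\<integral>\<^sup>+ y. riesz_kernel a x y * indicator (ball z (2*R)) y \<partial>mp)"
    and "LocN \<equiv> (\<integral>\<^sup>+ y. riesz_kernel a x y * indicator (ball z (2*R)) y \<partial>mn)"
  shows "ennreal (riesz_const (real DIM('a)) a *
           \<bar>riesz_pot a mp mn x - (if Fp z < \<infinity> \<and> Fn z < \<infinity>
               then (enn2real (Fp z) - enn2real (Fn z)) / riesz_const (real DIM('a)) a else 0)\<bar>)
         \<le> LocP + LocN + ennreal (2 * (s * 2 powr (2 * s + 1) * M))"
proof -
  define \<gamma> where "\<gamma> = riesz_const (real DIM('a)) a"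
  define cf where "cf = s * 2 powr (2 * s + 1) * M"
  have cf0: "0 \<le> cf" using s M by (simp add: cf_def)
  have Pp: "(\<integral>\<^sup>+ y. riesz_kernel a x y \<partial>mp) = LocP + Fp x"
    unfolding LocP_def Fp_def by (rule split_kernel[OF setsp]) auto
  have Pn: "(\<integral>\<^sup>+ y. riesz_kernel a x y \<partial>mn) = LocN + Fn x"
    unfolding LocN_def Fn_def by (rule split_kernel[OF setsn]) auto
  have fp1: "Fp x \<le> Fp z + ennreal cf" and fp2: "Fp z \<le> Fp x + ennreal cf"
    unfolding Fp_def cf_def using far_compare[OF setsp boundp s R M x] by auto
  have fn1: "Fn x \<le> Fn z + ennreal cf" and fn2: "Fn z \<le> Fn x + ennreal cf"
    unfolding Fn_def cf_def using far_compare[OF setsn boundn s R M x] by auto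
  have u: "riesz_pot a mp mn x = (if LocP + Fp x < \<infinity> \<and> LocN + Fn x < \<infinity>
       then (enn2real (LocP + Fp x) - enn2real (LocN + Fn x)) / \<gamma> else 0)"
    unfolding riesz_pot_def Let_def Pp Pn \<gamma>_def by simp
  show ?thesis
  proof (cases "Fp z < \<infinity> \<and> Fn z < \<infinity>")
    case False
    then have "Fp x = \<infinity> \<or> Fn x = \<infinity>"
      using fp2 fn2 by (metis ennreal_add_eq_top ennreal_neq_top infinity_ennreal_def less_top top.extremum_uniqueI)
    then have u0: "riesz_pot a mp mn x = 0" unfolding u by auto
    have c0: "(if Fp z < \<infinity> \<and> Fn z < \<infinity>
               then (enn2real (Fp z) - enn2real (Fn z)) / riesz_const (real DIM('a)) a else 0) = 0"
      by (rule if_not_P[OF False])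
    show ?thesis unfolding c0 u0 by simp
  next
    case True
    then have cdef: "(if Fp z < \<infinity> \<and> Fn z < \<infinity> then (enn2real (Fp z) - enn2real (Fn z)) / \<gamma> else 0)
        = (enn2real (Fp z) - enn2real (Fn z)) / \<gamma>" by simp
    have Fpx: "Fp x < \<infinity>" using fp1 True
      by (metis ennreal_add_eq_top ennreal_neq_top infinity_ennreal_def less_top top.extremum_uniqueI)
    have Fnx: "Fn x < \<infinity>" using fn1 True
      by (metis ennreal_add_eq_top ennreal_neq_top infinity_ennreal_def less_top top.extremum_uniqueI)
    show ?thesis
    proof (cases "LocP < \<infinity> \<and> LocN < \<infinity>")
      case False
      then have inf: "LocP + LocN + ennreal (2 * cf) = \<infinity>" using top.not_eq_extremum by fastforce
      show ?thesis by (subst inf[unfolded cf_def]) simp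
    next
      case LL: True
      obtain lpv where lpv: "LocP = ennreal lpv" "0 \<le> lpv" using ennreal_fin[of LocP] LL by blast
      obtain lnv where lnv: "LocN = ennreal lnv" "0 \<le> lnv" using ennreal_fin[of LocN] LL by blast
      obtain fpx where fpx: "Fp x = ennreal fpx" "0 \<le> fpx" using ennreal_fin[of "Fp x"] Fpx by blast
      obtain fnx where fnx: "Fn x = ennreal fnx" "0 \<le> fnx" using ennreal_fin[of "Fn x"] Fnx by blast
      obtain fpz where fpz: "Fp z = ennreal fpz" "0 \<le> fpz" using ennreal_fin[of "Fp z"] True by blast
      obtain fnz where fnz: "Fn z = ennreal fnz" "0 \<le> fnz" using ennreal_fin[of "Fn z"] True by blast
      have a1: "fpx \<le> fpz + cf" using fp1 fpx fpz cf0 by (intro ennreal_le_add_real) auto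
      have a2: "fpz \<le> fpx + cf" using fp2 fpx fpz cf0 by (intro ennreal_le_add_real) auto
      have a3: "fnx \<le> fnz + cf" using fn1 fnx fnz cf0 by (intro ennreal_le_add_real) auto
      have a4: "fnz \<le> fnx + cf" using fn2 fnx fnz cf0 by (intro ennreal_le_add_real) auto
      have g: "0 < \<gamma>" using gam by (simp add: \<gamma>_def)
      have uval: "riesz_pot a mp mn x = ((lpv + fpx) - (lnv + fnx)) / \<gamma>"
        unfolding u using lpv lnv fpx fnx by (simp add: ennreal_plus[symmetric] del: ennreal_plus)
      have cval: "(enn2real (Fp z) - enn2real (Fn z)) / \<gamma> = (fpz - fnz) / \<gamma>" using fpz fnz by simp
      have "\<gamma> * \<bar>riesz_pot a mp mn x - (fpz - fnz) / \<gamma>\<bar> = \<bar>(lpv - lnv) + (fpx - fpz) - (fnx - fnz)\<bar>"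
      proof -
        have "\<gamma> * \<bar>riesz_pot a mp mn x - (fpz - fnz) / \<gamma>\<bar> = \<bar>\<gamma> * (riesz_pot a mp mn x - (fpz - fnz) / \<gamma>)\<bar>"
          using g by (simp add: abs_mult)
        also have "\<gamma> * (riesz_pot a mp mn x - (fpz - fnz) / \<gamma>) = (lpv - lnv) + (fpx - fpz) - (fnx - fnz)"
          using g unfolding uval by (simp add: field_simps)
        finally show ?thesis .
      qed
      also have "\<dots> \<le> lpv + lnv + 2 * cf" using a1 a2 a3 a4 lpv lnv by linarith
      finally have main: "\<gamma> * \<bar>riesz_pot a mp mn x - (fpz - fnz) / \<gamma>\<bar> \<le> lpv + lnv + 2 * cf" .
      have "ennreal (\<gamma> * \<bar>riesz_pot a mp mn x - (fpz - fnz) / \<gamma>\<bar>) \<le> ennreal (lpv + lnv + 2 * cf)"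
        using main by (rule ennreal_leI)
      also have "\<dots> = LocP + LocN + ennreal (2 * cf)" using lpv lnv cf0 by (simp add: ennreal_plus[symmetric] del: ennreal_plus)
      finally show ?thesis unfolding cdef cval using True fpz fnz by (simp add: \<gamma>_def cf_def)
    qed
  qed
qed

lemma cube_in_ball:
  fixes a x :: "'a::euclidean_space"
  assumes l: "0 < l" and x: "x \<in> cbox a (a + l *\<^sub>R One)"
  shows "dist (a + (l/2) *\<^sub>R One) x < real DIM('a) * l"
proof -
  have c: "\<bar>(a + (l/2) *\<^sub>R One - x) \<bullet> b\<bar> \<le> l/2" if b: "b \<in> Basis" for b
  proof -
    have "a \<bullet> b \<le> x \<bullet> b" "x \<bullet> b \<le> a \<bullet> b + l" using x b by (auto simp: mem_box inner_add_left inner_sum_Basis)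
    then have "\<bar>a \<bullet> b + l / 2 - x \<bullet> b\<bar> \<le> l/2" by linarith
    then show ?thesis using b by (simp add: inner_add_left inner_diff_left inner_sum_Basis)
  qed
  have "dist (a + (l/2) *\<^sub>R One) x = norm (a + (l/2) *\<^sub>R One - x)" by (simp add: dist_norm)
  also have "\<dots> \<le> (\<Sum>b\<in>Basis. \<bar>(a + (l/2) *\<^sub>R One - x) \<bullet> b\<bar>)" by (rule norm_le_l1)
  also have "\<dots> \<le> (\<Sum>b\<in>(Basis::'a set). l/2)" by (rule sum_mono) (rule c)
  also have "\<dots> = real DIM('a) * (l/2)" by simp
  also have "\<dots> < real DIM('a) * l" using l by simp
  finally show ?thesis .
qed

lemma choquet_bound:
  fixes f :: "real \<Rightarrow> ennreal"
  assumes H0: "0 \<le> H0" and T: "0 \<le> T" and A: "0 \<le> A"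
    and f1: "\<And>t. 0 \<le> t \<Longrightarrow> f t \<le> ennreal H0"
    and f2: "\<And>t. T < t \<Longrightarrow> f t \<le> ennreal (A * t powr -2)"
    and AT: "A = 0 \<or> 0 < T"
  shows "(\<integral>\<^sup>+ t. indicator {0..} t * f t \<partial>lborel) \<le> ennreal (H0 * T) + ennreal (if 0 < T then A / T else 0)"
proof -
  have "(\<integral>\<^sup>+ t. indicator {0..} t * f t \<partial>lborel)
      \<le> (\<integral>\<^sup>+ t. ennreal H0 * indicator {0..T} t + ennreal (indicator {T..} t * (A * t powr -2)) \<partial>lborel)"
  proof (rule nn_integral_mono)
    fix t :: real
    show "indicator {0..} t * f t \<le> ennreal H0 * indicator {0..T} t + ennreal (indicator {T..} t * (A * t powr -2))"
    proof (cases "0 \<le> t")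
      case False then show ?thesis by simp
    next
      case True
      show ?thesis
      proof (cases "t \<le> T")
        case True
        then show ?thesis using f1[of t] \<open>0 \<le> t\<close> by (simp add: indicator_def add_increasing2)
      next
        case False
        then have "f t \<le> ennreal (A * t powr -2)" using f2 by simp
        then show ?thesis using False \<open>0 \<le> t\<close> by (simp add: indicator_def add_increasing)
      qed
    qed
  qed
  also have "\<dots> = (\<integral>\<^sup>+ t. ennreal H0 * indicator {0..T} t \<partial>lborel) + (\<integral>\<^sup>+ t. ennreal (indicator {T..} t * (A * t powr -2)) \<partial>lborel)"
    by (rule nn_integral_add) measurable
  also have "(\<integral>\<^sup>+ t. ennreal H0 * indicator {0..T} t \<partial>lborel) = ennreal (H0 * T)"
    using T H0 by (simp add: nn_integral_cmult_indicator ennreal_mult)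
  also have "(\<integral>\<^sup>+ t. ennreal (indicator {T..} t * (A * t powr -2)) \<partial>lborel) = ennreal (if 0 < T then A / T else 0)"
  proof (cases "0 < T")
    case True
    have "((\<lambda>t. t powr (-2)) has_integral -(T powr (-2+1)) / (-2+1)) {T..}"
      by (rule has_integral_powr_to_inf) (use True in auto)
    then have "((\<lambda>t. A * t powr (-2)) has_integral A * (-(T powr (-2+1)) / (-2+1))) {T..}"
      by (rule has_integral_mult_right)
    then have "(\<integral>\<^sup>+ t. ennreal (indicator {T..} t * (A * t powr -2)) \<partial>lborel) = ennreal (A * (-(T powr (-2+1)) / (-2+1)))"
      by (intro nn_integral_has_integral_lebesgue) (use A in auto)
    also have "A * (-(T powr (-2+1)) / (-2+1)) = A / T" using True by (simp add: powr_minus divide_inverse)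
    finally show ?thesis using True by simp
  next
    case False
    then have "A = 0" using AT by simp
    then show ?thesis using False by simp
  qed
  finally show ?thesis .
qed

lemma level_set_bound:
  fixes mp mn :: "'a::euclidean_space measure"
  assumes setsp: "sets mp = sets borel" and setsn: "sets mn = sets borel"
    and mor: "\<And>x r. 0 < r \<Longrightarrow> emeasure mp (ball x r) + emeasure mn (ball x r) \<le> ennreal (M * r powr s)"
    and s: "s = real DIM('a) - a" "0 < s" and R: "0 < R" and M: "0 \<le> M" and d: "0 < d"
    and Q: "\<And>x. x \<in> Q \<Longrightarrow> dist z x < R" and t: "0 < t" and b: "b = s + 2*d"
  shows "hcontent b {x \<in> Q. ennreal t < (\<integral>\<^sup>+ y. riesz_kernel a x y * indicator (ball z (2*R)) y \<partial>mp)
                        + (\<integral>\<^sup>+ y. riesz_kernel a x y * indicator (ball z (2*R)) y \<partial>mn)}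
     \<le> ennreal (omega_const b * 5 powr b * M^2 * (2*R) powr b / (t * (1 - (1/2) powr d) / 2 powr (s+d))^2)"
proof (rule vitali_content[OF setsp setsn])
  define lam where "lam = t * (1 - (1/2) powr d) / 2 powr (s+d)"
  have q: "(1/2::real) powr d < 1"
  proof -
    have "1 < (2::real) powr d" using d by (simp add: gr_one_powr)
    moreover have "(1/2::real) powr d = 1 / 2 powr d" by (simp add: powr_divide)
    ultimately show ?thesis by simp
  qed
  show "0 < t * (1 - (1/2) powr d) / 2 powr (s+d)" using t q by simp
  show "ball z (2*R) \<in> sets borel" by simp
  show "emeasure mp (ball z (2*R)) + emeasure mn (ball z (2*R)) \<le> ennreal (M * (2*R) powr s)"
    using mor[of "2*R" z] R by simp
  show "0 < 2*R" using R by simp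
  show "0 \<le> M" by (rule M)
  show "b = s + 2*d" by (rule b)
  show "0 < b" using b s d by simp
  fix x assume "x \<in> {x \<in> Q. ennreal t < (\<integral>\<^sup>+ y. riesz_kernel a x y * indicator (ball z (2*R)) y \<partial>mp)
                        + (\<integral>\<^sup>+ y. riesz_kernel a x y * indicator (ball z (2*R)) y \<partial>mn)}"
  then have xQ: "x \<in> Q" and big: "ennreal t < (\<integral>\<^sup>+ y. riesz_kernel a x y * indicator (ball z (2*R)) y \<partial>mp)
                        + (\<integral>\<^sup>+ y. riesz_kernel a x y * indicator (ball z (2*R)) y \<partial>mn)" by auto
  have xz: "dist z x < 2*R" using Q[OF xQ] R by simp
  obtain r where r: "0 < r" "r \<le> 2*(2*R)"
    "ennreal (t * (1 - (1/2) powr d) / 2 powr (s+d) * r powr (s+d) * (2*R) powr (-d))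
       < emeasure mp (ball x r \<inter> ball z (2*R)) + emeasure mn (ball x r \<inter> ball z (2*R))"
    using weak_exists[OF setsp setsn s _ xz t d big] R by auto
  have "emeasure mp (ball x r \<inter> ball z (2*R)) + emeasure mn (ball x r \<inter> ball z (2*R))
      \<le> emeasure mp (ball x r) + emeasure mn (ball x r)"
    by (intro add_mono emeasure_mono) (auto simp: setsp setsn)
  also have "\<dots> \<le> ennreal (M * r powr s)" by (rule mor[OF r(1)])
  finally show "\<exists>r>0. r \<le> 2*(2*R) \<and>
        ennreal (t * (1 - (1/2) powr d) / 2 powr (s+d) * r powr (s+d) * (2*R) powr (-d))
          < emeasure mp (ball x r \<inter> ball z (2*R)) + emeasure mn (ball x r \<inter> ball z (2*R)) \<and>
        emeasure mp (ball x r \<inter> ball z (2*R)) + emeasure mn (ball x r \<inter> ball z (2*R)) \<le> ennreal (M * r powr s)"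
    using r by blast
qed

definition cst :: "real \<Rightarrow> real \<Rightarrow> real \<Rightarrow> real" where
  "cst n a e = omega_const (n - a + e) * n powr (n - a + e) * (2 * (2 * ((n - a) * 2 powr (2 * (n - a) + 1))) / riesz_const n a)
    + 4 * (omega_const (n - a + e) * 5 powr (n - a + e) * (2 * n) powr (n - a + e))
        / ((1 - (1/2) powr (e/2)) / 2 powr ((n - a) + e/2) * riesz_const n a)^2
        / (2 * (2 * ((n - a) * 2 powr (2 * (n - a) + 1))) / riesz_const n a)"

lemma riesz_const_pos: "0 < a \<Longrightarrow> a < n \<Longrightarrow> 0 < riesz_const n a"
  unfolding riesz_const_def by (auto intro!: divide_pos_pos mult_pos_pos Gamma_real_pos)

lemma half_powr_lt1: "0 < d \<Longrightarrow> (1/2::real) powr d < 1"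
proof -
  assume d: "0 < d"
  have "1 < (2::real) powr d" using d by (simp add: gr_one_powr)
  moreover have "(1/2::real) powr d = 1 / 2 powr d" by (simp add: powr_divide)
  ultimately show ?thesis by simp
qed

lemma cst_pos:
  assumes "0 < a" "a < n" "0 < e"
  shows "0 < cst n a e"
proof -
  have g: "0 < riesz_const n a" using riesz_const_pos[OF assms(1,2)] .
  have q: "0 < 1 - (1/2::real) powr (e/2)" using half_powr_lt1[of "e/2"] assms by simp
  have w: "0 < omega_const (n - a + e)" using assms by (intro omega_pos) simp
  show ?thesis unfolding cst_def using g q w assms
    by (intro add_pos_pos mult_pos_pos divide_pos_pos) auto
qed

lemma f2_arith:
  fixes X q P g t t' :: real
  assumes X: "0 \<le> X" and q: "0 < q" and P: "0 < P" and g: "0 < g" and t: "0 < t" and t': "g * t / 2 \<le> t'"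
  shows "X / (t' * q / P)^2 \<le> 4 * X / ((q/P) * g)^2 * t powr -2"
proof -
  have p0: "0 < g * t * q / (2*P)" using q P g t by simp
  have "g * t * q / (2*P) \<le> t' * q / P"
    using t' q P by (simp add: field_simps)
  moreover have p1: "0 < t' * q / P" using p0 \<open>g * t * q / (2*P) \<le> t' * q / P\<close> by linarith
  ultimately have "(g * t * q / (2*P))^2 \<le> (t' * q / P)^2" using p0 by (intro power_mono) auto
  then have "X / (t' * q / P)^2 \<le> X / (g * t * q / (2*P))^2"
  proof (rule divide_left_mono)
    show "0 < (t' * q / P)^2 * (g * t * q / (2*P))^2" using p0 p1 by (metis mult_pos_pos zero_less_power)
  qed (use X in auto)
  also have "\<dots> = 4 * X / ((q/P) * g)^2 * t powr -2"
  proof -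
    have "t powr -2 = 1 / t^2" using t by (simp add: powr_minus powr_numeral divide_inverse)
    then show ?thesis using q P g t by (simp add: field_simps power2_eq_square)
  qed
  finally show ?thesis .
qed

lemma final_arith:
  fixes n a e l M :: real
  assumes pos: "0 < a" "a < n" "0 < e" and l: "0 < l" and M: "0 < M"
  defines "b \<equiv> n - a + e" and "cf \<equiv> (n - a) * 2 powr (2 * (n - a) + 1)"
    and "g \<equiv> riesz_const n a" and "kq \<equiv> (1 - (1/2) powr (e/2)) / 2 powr ((n - a) + e/2)"
  shows "omega_const b * (n * l) powr b * (2 * (2 * cf * M) / g)
          + 4 * (omega_const b * 5 powr b * M^2 * (2 * (n * l)) powr b) / (kq * g)^2 / (2 * (2 * cf * M) / g)
       = cst n a e * l powr b * M"
proof -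
  have n: "0 < n" using pos by simp
  have g: "0 < g" unfolding g_def using riesz_const_pos[OF pos(1,2)] .
  have cf: "0 < cf" unfolding cf_def using pos by simp
  have kq: "0 < kq" unfolding kq_def using half_powr_lt1[of "e/2"] pos by simp
  have e1: "(n * l) powr b = n powr b * l powr b" using n l by (simp add: powr_mult)
  have e2: "(2 * (n * l)) powr b = (2 * n) powr b * l powr b" using n l by (simp add: powr_mult mult.assoc)
  have cst: "cst n a e = omega_const b * n powr b * (2 * (2 * cf) / g)
      + 4 * (omega_const b * 5 powr b * (2 * n) powr b) / (kq * g)^2 / (2 * (2 * cf) / g)"
    unfolding cst_def b_def cf_def g_def kq_def by simp
  show ?thesis unfolding cst e1 e2 using g cf kq M l n
    by (simp add: field_simps power2_eq_square)
qed

lemma cube_estimate: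
  fixes mp mn :: "'a::euclidean_space measure" and a0 :: 'a
  assumes al: "0 < \<alpha>" "\<alpha> < real DIM('a)" and ep: "0 < \<epsilon>"
    and sr: "signed_radon mp mn" and M: "0 \<le> M"
    and mor: "\<And>x r. 0 < r \<Longrightarrow> emeasure mp (ball x r) + emeasure mn (ball x r) \<le> ennreal (M * r powr (real DIM('a) - \<alpha>))"
    and l: "0 < l"
  shows "\<exists>c. choquet (real DIM('a) - \<alpha> + \<epsilon>) (cbox a0 (a0 + l *\<^sub>R One)) (\<lambda>x. \<bar>riesz_pot \<alpha> mp mn x - c\<bar>)
            \<le> ennreal (cst (real DIM('a)) \<alpha> \<epsilon> * l powr (real DIM('a) - \<alpha> + \<epsilon>) * M)"
proof -
  define n where "n = real DIM('a)"
  define s where "s = n - \<alpha>"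
  define b where "b = n - \<alpha> + \<epsilon>"
  define d where "d = \<epsilon> / 2"
  define \<gamma> where "\<gamma> = riesz_const n \<alpha>"
  define cf where "cf = s * 2 powr (2 * s + 1)"
  define R where "R = n * l"
  define z where "z = a0 + (l/2) *\<^sub>R (One::'a)"
  define Q where "Q = cbox a0 (a0 + l *\<^sub>R (One::'a))"
  define kq where "kq = (1 - (1/2) powr d) / 2 powr (s + d)"
  define u where "u = riesz_pot \<alpha> mp mn"
  have n1: "1 \<le> n" unfolding n_def by (simp add: DIM_positive Suc_le_eq)
  have s0: "0 < s" "s = real DIM('a) - \<alpha>" using al by (auto simp: s_def n_def)
  have R0: "0 < R" using n1 l by (simp add: R_def)
  have g0: "0 < \<gamma>" unfolding \<gamma>_def using riesz_const_pos[OF al(1)] al(2) by (simp add: n_def)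
  have cf0: "0 < cf" using s0 by (simp add: cf_def)
  have d0: "0 < d" using ep by (simp add: d_def)
  have bsd: "b = s + 2 * d" by (simp add: b_def s_def d_def)
  have b0: "0 < b" using bsd s0 d0 by simp
  have setsp: "sets mp = sets borel" and setsn: "sets mn = sets borel" using sr by (auto simp: signed_radon_def)
  have mor': "\<And>x r. 0 < r \<Longrightarrow> emeasure mp (ball x r) + emeasure mn (ball x r) \<le> ennreal (M * r powr s)"
    using mor by (simp add: s_def n_def)
  have boundp: "emeasure mp (ball w r) \<le> ennreal (M * r powr s)" if "0 < r" for w r
    using mor'[OF that, of w] by (meson add_increasing2 order_trans zero_le order_refl)
  have boundn: "emeasure mn (ball w r) \<le> ennreal (M * r powr s)" if "0 < r" for w r
    using mor'[OF that, of w] by (meson add_increasing order_trans zero_le order_refl)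
  define Fp where "Fp = (\<lambda>w. (\<integral>\<^sup>+ y. riesz_kernel \<alpha> w y * indicator (- ball z (2*R)) y \<partial>mp))"
  define Fn where "Fn = (\<lambda>w. (\<integral>\<^sup>+ y. riesz_kernel \<alpha> w y * indicator (- ball z (2*R)) y \<partial>mn))"
  define LP where "LP = (\<lambda>x. (\<integral>\<^sup>+ y. riesz_kernel \<alpha> x y * indicator (ball z (2*R)) y \<partial>mp))"
  define LN where "LN = (\<lambda>x. (\<integral>\<^sup>+ y. riesz_kernel \<alpha> x y * indicator (ball z (2*R)) y \<partial>mn))"
  define c where "c = (if Fp z < \<infinity> \<and> Fn z < \<infinity> then (enn2real (Fp z) - enn2real (Fn z)) / \<gamma> else 0)"
  have inQ: "dist z x < R" if "x \<in> Q" for x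
    using cube_in_ball[OF l that[unfolded Q_def]] by (simp add: z_def R_def n_def)
  have pw: "ennreal (\<gamma> * \<bar>u x - c\<bar>) \<le> LP x + LN x + ennreal (2 * (cf * M))" if "x \<in> Q" for x
    using pointwise_bound[OF setsp setsn boundp boundn s0(2) s0(1) R0 M inQ[OF that]] g0
    unfolding u_def c_def Fp_def Fn_def LP_def LN_def \<gamma>_def cf_def n_def by (simp add: mult.assoc)
  define f where "f t = hcontent b {x \<in> Q. t < \<bar>u x - c\<bar>}" for t
  define H0 where "H0 = omega_const b * R powr b"
  define T where "T = 2 * (2 * cf * M) / \<gamma>"
  define X where "X = omega_const b * 5 powr b * M^2 * (2*R) powr b"
  define A where "A = 4 * X / (kq * \<gamma>)^2"
  have om: "0 < omega_const b" using b0 by (intro omega_pos) simp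
  have H00: "0 \<le> H0" using om R0 by (simp add: H0_def)
  have T0: "0 \<le> T" using cf0 M g0 by (simp add: T_def)
  have X0: "0 \<le> X" using om R0 by (simp add: X_def)
  have A0: "0 \<le> A" using X0 by (simp add: A_def)
  have q0: "0 < 1 - (1/2::real) powr d" using half_powr_lt1[OF d0] by simp
  have f1: "f t \<le> ennreal H0" if "0 \<le> t" for t
  proof -
    have "f t \<le> hcontent b (ball z R)" unfolding f_def by (rule hcontent_mono) (auto dest: inQ)
    also have "\<dots> \<le> ennreal H0" unfolding H0_def by (rule hcontent_ball_le) (use R0 b0 in auto)
    finally show ?thesis .
  qed
  have f2: "f t \<le> ennreal (A * t powr -2)" if tT: "T < t" for t
  proof -
    have t0: "0 < t" using tT T0 by simp
    define t' where "t' = \<gamma> * t - 2 * (cf * M)"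
    have gt: "2 * (2 * cf * M) < \<gamma> * t" using tT g0 by (simp add: T_def pos_divide_less_eq mult.commute)
    have t'h: "\<gamma> * t / 2 \<le> t'" using gt by (simp add: t'_def)
    have t'0: "0 < t'" using t'h g0 t0 by (smt (verit) divide_pos_pos mult_pos_pos)
    have sub: "{x \<in> Q. t < \<bar>u x - c\<bar>} \<subseteq> {x \<in> Q. ennreal t' < LP x + LN x}"
    proof safe
      fix x assume xQ: "x \<in> Q" and tx: "t < \<bar>u x - c\<bar>"
      have "ennreal (\<gamma> * t) < ennreal (\<gamma> * \<bar>u x - c\<bar>)"
        using tx g0 t0 by (subst ennreal_less_iff) auto
      also have "\<dots> \<le> LP x + LN x + ennreal (2 * (cf * M))" by (rule pw[OF xQ])
      finally have lt: "ennreal (\<gamma> * t) < LP x + LN x + ennreal (2 * (cf * M))" .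
      show "ennreal t' < LP x + LN x"
      proof (cases "LP x + LN x < \<infinity>")
        case False
        then have "LP x + LN x = \<infinity>" by (metis less_top infinity_ennreal_def)
        then show ?thesis by (metis ennreal_less_top infinity_ennreal_def)
      next
        case True
        obtain L where L: "LP x + LN x = ennreal L" "0 \<le> L" using ennreal_fin[OF True] by blast
        have "ennreal (\<gamma> * t) < ennreal (L + 2 * (cf * M))"
          using lt L cf0 M by (simp add: ennreal_plus[symmetric] del: ennreal_plus)
        moreover have "0 \<le> \<gamma> * t" using g0 t0 by simp
        ultimately have "\<gamma> * t < L + 2 * (cf * M)" by (simp add: ennreal_less_iff)
        then have "t' < L" by (simp add: t'_def)
        then show ?thesis using L t'0 by (simp add: ennreal_less_iff)
      qed
    qed
    have "f t \<le> hcontent b {x \<in> Q. ennreal t' < LP x + LN x}" unfolding f_def by (rule hcontent_mono[OF sub])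
    also have "\<dots> \<le> ennreal (omega_const b * 5 powr b * M^2 * (2*R) powr b / (t' * (1 - (1/2) powr d) / 2 powr (s+d))^2)"
      unfolding LP_def LN_def
      by (rule level_set_bound[OF setsp setsn mor' s0(2) s0(1) R0 M d0 inQ t'0 bsd])
    also have "\<dots> \<le> ennreal (A * t powr -2)"
    proof (rule ennreal_leI)
      show "omega_const b * 5 powr b * M^2 * (2*R) powr b / (t' * (1 - (1/2) powr d) / 2 powr (s+d))^2 \<le> A * t powr -2"
        using f2_arith[OF X0 q0 _ g0 t0 t'h, of "2 powr (s+d)"]
        unfolding A_def X_def kq_def by simp
    qed
    finally show ?thesis .
  qed
  have AT: "A = 0 \<or> 0 < T"
  proof (cases "M = 0")
    case True then show ?thesis by (simp add: A_def X_def)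
  next
    case False then show ?thesis using M cf0 g0 by (simp add: T_def)
  qed
  have ch: "choquet b Q (\<lambda>x. \<bar>u x - c\<bar>) = (\<integral>\<^sup>+ t. indicator {0..} t * f t \<partial>lborel)"
    unfolding choquet_def f_def by simp
  have "choquet b Q (\<lambda>x. \<bar>u x - c\<bar>) \<le> ennreal (H0 * T) + ennreal (if 0 < T then A / T else 0)"
    unfolding ch by (rule choquet_bound[OF H00 T0 A0 f1 f2 AT])
  also have "\<dots> \<le> ennreal (cst n \<alpha> \<epsilon> * l powr b * M)"
  proof (cases "M = 0")
    case True
    then have "T = 0" by (simp add: T_def)
    then show ?thesis by simp
  next
    case False
    then have M0: "0 < M" using M by simp
    then have Tp: "0 < T" using cf0 g0 by (simp add: T_def)
    have "ennreal (H0 * T) + ennreal (if 0 < T then A / T else 0) = ennreal (H0 * T + A / T)"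
      using Tp H00 A0 by (simp add: ennreal_plus[symmetric] del: ennreal_plus)
    also have "H0 * T + A / T = cst n \<alpha> \<epsilon> * l powr b * M"
      unfolding H0_def T_def A_def X_def R_def kq_def \<gamma>_def cf_def s_def d_def b_def
      by (rule final_arith[OF al(1) al(2)[folded n_def] ep l M0, unfolded Let_def])
    finally show ?thesis by simp
  qed
  finally show ?thesis unfolding b_def n_def u_def Q_def by blast
qed

theorem theorem1p8:
  fixes \<alpha> \<epsilon> :: real
  assumes "0 < \<alpha>" "\<alpha> < real DIM('a::euclidean_space)" "0 < \<epsilon>" "\<epsilon> \<le> \<alpha>"
  shows "\<exists>C>0. \<forall>(mp :: 'a measure) mn.
     signed_radon mp mn \<and> morrey_norm (real DIM('a) - \<alpha>) mp mn < \<infinity> \<and>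
     (\<forall>K. compact K \<longrightarrow> L1_content (real DIM('a) - \<alpha> + \<epsilon>) K (riesz_pot \<alpha> mp mn)) \<longrightarrow>
     bmo_norm (real DIM('a) - \<alpha> + \<epsilon>) (riesz_pot \<alpha> mp mn)
       \<le> ennreal C * morrey_norm (real DIM('a) - \<alpha>) mp mn"
proof (intro exI[of _ "cst (real DIM('a)) \<alpha> \<epsilon>"] conjI allI impI)
  show "0 < cst (real DIM('a)) \<alpha> \<epsilon>" using assms by (intro cst_pos) auto
  fix mp mn :: "'a measure"
  assume H: "signed_radon mp mn \<and> morrey_norm (real DIM('a) - \<alpha>) mp mn < \<infinity> \<and>
     (\<forall>K. compact K \<longrightarrow> L1_content (real DIM('a) - \<alpha> + \<epsilon>) K (riesz_pot \<alpha> mp mn))"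
  define s where "s = real DIM('a) - \<alpha>"
  define Mn where "Mn = morrey_norm s mp mn"
  define M where "M = enn2real Mn"
  define C where "C = cst (real DIM('a)) \<alpha> \<epsilon>"
  have sr: "signed_radon mp mn" using H by blast
  have Mfin: "Mn < \<infinity>" using H by (simp add: Mn_def s_def)
  have MM: "Mn = ennreal M" "0 \<le> M" using ennreal_fin[OF Mfin] by (auto simp: M_def)
  have mor: "emeasure mp (ball x r) + emeasure mn (ball x r) \<le> ennreal (M * r powr (real DIM('a) - \<alpha>))"
    if r: "0 < r" for x r
  proof -
    define m where "m = emeasure mp (ball x r) + emeasure mn (ball x r)"
    have "m / ennreal (r powr s) \<le> Mn"
      unfolding Mn_def morrey_norm_def m_def
      by (rule SUP_upper2[of "(x, r)"]) (use r in auto)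
    have rr: "ennreal (r powr s) / ennreal (r powr s) = 1"
      using r by (simp add: divide_ennreal)
    have "m = (m / ennreal (r powr s)) * ennreal (r powr s)"
      by (simp add: ennreal_divide_times rr)
    also have "\<dots> \<le> Mn * ennreal (r powr s)"
      by (intro mult_right_mono \<open>m / ennreal (r powr s) \<le> Mn\<close>) auto
    also have "\<dots> = ennreal (M * r powr s)" using MM by (simp add: ennreal_mult)
    finally show ?thesis by (simp add: m_def s_def)
  qed
  show "bmo_norm (real DIM('a) - \<alpha> + \<epsilon>) (riesz_pot \<alpha> mp mn)
       \<le> ennreal (cst (real DIM('a)) \<alpha> \<epsilon>) * morrey_norm (real DIM('a) - \<alpha>) mp mn"
    unfolding bmo_norm_def
  proof (rule SUP_least)
    fix al :: "'a \<times> real" assume "al \<in> {(a, l). 0 < l}"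
    then obtain a0 l where al: "al = (a0, l)" "0 < l" by auto
    obtain c where c: "choquet (real DIM('a) - \<alpha> + \<epsilon>) (cbox a0 (a0 + l *\<^sub>R One)) (\<lambda>x. \<bar>riesz_pot \<alpha> mp mn x - c\<bar>)
            \<le> ennreal (C * l powr (real DIM('a) - \<alpha> + \<epsilon>) * M)"
      using cube_estimate[OF assms(1,2,3) sr MM(2) mor al(2)] unfolding C_def by blast
    have C0: "0 < C" unfolding C_def using assms by (intro cst_pos) auto
    have "(INF c. ennreal (snd al powr - (real DIM('a) - \<alpha> + \<epsilon>)) *
          choquet (real DIM('a) - \<alpha> + \<epsilon>) (cbox (fst al) (fst al + snd al *\<^sub>R One)) (\<lambda>x. \<bar>riesz_pot \<alpha> mp mn x - c\<bar>))
        \<le> ennreal (l powr - (real DIM('a) - \<alpha> + \<epsilon>)) *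
          choquet (real DIM('a) - \<alpha> + \<epsilon>) (cbox a0 (a0 + l *\<^sub>R One)) (\<lambda>x. \<bar>riesz_pot \<alpha> mp mn x - c\<bar>)"
      unfolding al fst_conv snd_conv by (rule INF_lower2[where i=c]) auto
    also have "\<dots> \<le> ennreal (l powr - (real DIM('a) - \<alpha> + \<epsilon>)) * ennreal (C * l powr (real DIM('a) - \<alpha> + \<epsilon>) * M)"
      by (intro mult_left_mono c) auto
    also have "\<dots> = ennreal (C * M)"
    proof -
      have "l powr - (real DIM('a) - \<alpha> + \<epsilon>) * (C * l powr (real DIM('a) - \<alpha> + \<epsilon>) * M) = C * M"
      proof -
        have "l powr - (real DIM('a) - \<alpha> + \<epsilon>) * l powr (real DIM('a) - \<alpha> + \<epsilon>) = 1"
          using al(2) by (simp add: powr_add[symmetric])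
        then show ?thesis by (metis (no_types, lifting) mult.assoc mult.left_commute mult_1)
      qed
      then show ?thesis using al(2) C0 MM by (simp add: ennreal_mult[symmetric])
    qed
    also have "\<dots> = ennreal (cst (real DIM('a)) \<alpha> \<epsilon>) * morrey_norm (real DIM('a) - \<alpha>) mp mn"
      using MM C0 by (simp add: C_def Mn_def s_def ennreal_mult)
    finally show "(INF c. ennreal (snd al powr - (real DIM('a) - \<alpha> + \<epsilon>)) *
          choquet (real DIM('a) - \<alpha> + \<epsilon>) (cbox (fst al) (fst al + snd al *\<^sub>R One)) (\<lambda>x. \<bar>riesz_pot \<alpha> mp mn x - c\<bar>))
        \<le> ennreal (cst (real DIM('a)) \<alpha> \<epsilon>) * morrey_norm (real DIM('a) - \<alpha>) mp mn" .
  qed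
qed

end
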